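(* For a positive integer $r$ and complex numbers $e_1,\ldots,e_r$, define the rational function $\Phi_{e_1,\ldots,e_r}(x)$ recursively by $\Phi_{e_1}(x)=\frac{1}{e_1-x}$ and $\Phi_{e_1,\ldots,e_r}(x)=\frac{1}{e_r-\Phi_{e_1,\ldots,e_{r-1}}(x)}$ for $r\ge 2$, i.e. $$\Phi_{e_1,\ldots,e_r}(x)=\cfrac{1}{e_r-\cfrac{1}{e_{r-1}-\cfrac{1}{\cdots-\cfrac{1}{e_{2}-\cfrac{1}{e_1-x}}}}}.$$ Let $r$ be a positive integer and let $e_1,\ldots,e_r$ be integers. Suppose that for every permutation $s$ of $\{1,\ldots,r\}$ one has $\Phi_{e_{s(1)},\ldots,e_{s(r)}}(x)=x$ as rational functions. Then $e_1=\cdots=e_r$, and $e_1\in\{-1,0,1\}$. *)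

theory Defs
  imports "HOL-Computational_Algebra.Polynomial" "HOL-Computational_Algebra.Fraction_Field"
          "HOL-Combinatorics.Permutations"
begin

type_synonym ratfun = "complex poly fract"

definition ratfun_X :: ratfun where
  "ratfun_X = Fract [:0, 1:] 1"

definition ratfun_const :: "complex \<Rightarrow> ratfun" where
  "ratfun_const c = Fract [:c:] 1"

text \<open>Phi e r = Phi_{e 1, ..., e r}(x). The value at r = 0 is the seed x, so that
  Phi e 1 = 1/(e 1 - x) and Phi e r = 1/(e r - Phi e (r-1)) for r >= 2.\<close>
fun Phi :: "(nat \<Rightarrow> complex) \<Rightarrow> nat \<Rightarrow> ratfun" where
  "Phi e 0 = ratfun_X"
| "Phi e (Suc r) = 1 / (ratfun_const (e (Suc r)) - Phi e r)"

end

theory Submission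
  imports Defs
begin

type_synonym m2 = "int \<times> int \<times> int \<times> int"

fun mm :: "m2 \<Rightarrow> m2 \<Rightarrow> m2" where
  "mm (a,b,c,d) (a',b',c',d') = (a*a' + b*c', a*b' + b*d', c*a' + d*c', c*b' + d*d')"

fun Mt :: "int \<Rightarrow> m2" where
  "Mt e = (0, 1, -1, e)"

fun prodM :: "(nat \<Rightarrow> int) \<Rightarrow> nat \<Rightarrow> m2" where
  "prodM f 0 = (1,0,0,1)"
| "prodM f (Suc n) = mm (Mt (f (Suc n))) (prodM f n)"

lemma mm_assoc: "mm (mm x y) z = mm x (mm y z)"
  by (cases x; cases y; cases z) (simp add: algebra_simps)

lemma mm_id: "mm x (1,0,0,1) = x"
  by (cases x) simp

lemma prodM_split: "prodM f (k + n) = mm (prodM (\<lambda>i. f (i + k)) n) (prodM f k)"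
proof (induction n)
  case 0 then show ?case by (cases "prodM f k") simp
next
  case (Suc n)
  have eqk: "Suc (k + n) = Suc n + k" by simp
  have "prodM f (k + Suc n) = mm (Mt (f (Suc n + k))) (prodM f (k + n))"
    using prodM.simps(2)[of f "k + n"] by (simp only: add_Suc_right eqk)
  also have "\<dots> = mm (Mt (f (Suc n + k))) (mm (prodM (\<lambda>i. f (i + k)) n) (prodM f k))"
    by (simp only: Suc.IH)
  also have "\<dots> = mm (prodM (\<lambda>i. f (i + k)) (Suc n)) (prodM f k)"
    by (simp only: mm_assoc prodM.simps)
  finally show ?case .
qed

lemma prodM_2: "prodM f 2 = mm (Mt (f 2)) (Mt (f 1))"
  by (simp add: numeral_2_eq_2 mm_id del: Mt.simps mm.simps)

lemma prodM_cong: "(\<forall>i\<in>{1..n}. f i = g i) \<Longrightarrow> prodM f n = prodM g n"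
  by (induction n) auto

lemma prodM_det: "prodM f n = (a,b,c,d) \<Longrightarrow> a*d - b*c = 1"
proof (induction n arbitrary: a b c d)
  case 0 then show ?case by simp
next
  case (Suc n)
  obtain a0 b0 c0 d0 where h: "prodM f n = (a0,b0,c0,d0)" by (cases "prodM f n") auto
  with Suc.IH have "a0*d0 - b0*c0 = 1" by blast
  moreover from Suc.prems h have e: "a = c0" "b = d0" "c = f (Suc n) * c0 - a0" "d = f (Suc n) * d0 - b0"
    by auto
  moreover have "c0*d - d0*c = a0*d0 - b0*c0" unfolding e(3,4) by (simp add: algebra_simps)
  ultimately show ?case using e by simp
qed

lemma Phi_rep: "prodM f n = (a,b,c,d) \<Longrightarrow>
  Phi (\<lambda>i. of_int (f i)) n = Fract [:of_int b, of_int a:] [:of_int d, of_int c:]"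
proof (induction n arbitrary: a b c d)
  case 0 then show ?case by (simp add: ratfun_X_def one_pCons)
next
  case (Suc n)
  obtain a0 b0 c0 d0 where h: "prodM f n = (a0,b0,c0,d0)" by (cases "prodM f n") auto
  have det: "a0*d0 - b0*c0 = 1" using prodM_det[OF h] .
  have IH: "Phi (\<lambda>i. of_int (f i)) n = Fract [:of_int b0, of_int a0:] [:of_int d0, of_int c0:]"
    using Suc.IH h by blast
  from Suc.prems h have e: "a = c0" "b = d0" "c = f (Suc n) * c0 - a0" "d = f (Suc n) * d0 - b0"
    by auto
  define E where "E = complex_of_int (f (Suc n))"
  have Q: "[:complex_of_int d0, of_int c0:] \<noteq> 0"
  proof
    assume "[:complex_of_int d0, of_int c0:] = 0"
    then have "d0 = 0" "c0 = 0" by auto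
    with det show False by simp
  qed
  have N: "[:complex_of_int d, of_int c:] \<noteq> 0"
  proof
    assume "[:complex_of_int d, of_int c:] = 0"
    then have "d = 0" "c = 0" by auto
    with det e have "a0*d0 - b0*c0 = c0 * d - d0 * c" by (simp add: algebra_simps)
    with det \<open>d = 0\<close> \<open>c = 0\<close> show False by simp
  qed
  have ed: "complex_of_int d = E * of_int d0 - of_int b0" "complex_of_int c = E * of_int c0 - of_int a0"
    using e by (simp_all add: E_def)
  have P: "[:E:] * [:complex_of_int d0, of_int c0:] * 1 - [:of_int b0, of_int a0:] * 1
      = [:complex_of_int d, of_int c:]"
    using ed by (simp add: algebra_simps)
  have "Phi (\<lambda>i. of_int (f i)) (Suc n) = 1 / (Fract [:E:] 1 - Fract [:of_int b0, of_int a0:] [:of_int d0, of_int c0:])"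
    using IH by (simp add: ratfun_const_def E_def)
  also have "\<dots> = Fract 1 1 / Fract [:complex_of_int d, of_int c:] ([:complex_of_int d0, of_int c0:])"
    using Q P by (simp add: One_fract_def)
  also have "\<dots> = Fract [:of_int b, of_int a:] [:of_int d, of_int c:]"
    using e by simp
  finally show ?case .
qed

lemma X_cond:
  assumes "Phi (\<lambda>i. of_int (f i)) n = ratfun_X"
  shows "\<exists>x1 x4. prodM f n = (x1,0,0,x4) \<and> x4 \<noteq> 0"
proof -
  obtain a b c d where h: "prodM f n = (a,b,c,d)" by (cases "prodM f n") auto
  have det: "a*d - b*c = 1" using prodM_det[OF h] .
  have Q: "[:complex_of_int d, of_int c:] \<noteq> 0"
  proof
    assume "[:complex_of_int d, of_int c:] = 0"
    then have "d = 0" "c = 0" by auto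
    with det show False by simp
  qed
  from assms Phi_rep[OF h] have "Fract [:of_int b, of_int a:] [:of_int d, of_int c:] = Fract [:0, 1:] (1::complex poly)"
    by (simp add: ratfun_X_def)
  with Q have "[:complex_of_int b, of_int a:] * 1 = [:0, 1:] * [:of_int d, of_int c:]"
    by (simp add: eq_fract)
  then have "b = 0" "a = d" "c = 0" by auto
  with det h show ?thesis by auto
qed

lemma swap_eq:
  assumes "mm R (mm (Mt a) (Mt b)) = (x1,0,0,x4)" "x4 \<noteq> 0"
    and "mm R (mm (Mt b) (Mt a)) = (y1,0,0,y4)"
  shows "a = b"
proof -
  obtain r1 r2 r3 r4 where R: "R = (r1,r2,r3,r4)" by (cases R) auto
  from assms(1) R have h1: "-r3 - a*r4 = 0" "r3*b + r4*(a*b-1) = x4"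
    by (auto simp: algebra_simps)
  from assms(3) R have h2: "-r3 - b*r4 = 0" by (auto simp: algebra_simps)
  from h1 have r3: "r3 = -a*r4" by simp
  with h1 have "r4 = - x4" by (simp add: algebra_simps)
  with h2 r3 assms(2) show ?thesis by simp
qed

fun useq :: "int \<Rightarrow> nat \<Rightarrow> int" where
  "useq c 0 = 0"
| "useq c (Suc 0) = 1"
| "useq c (Suc (Suc n)) = c * useq c (Suc n) - useq c n"

lemma prodM_const: "prodM (\<lambda>_. c) (Suc n) = (- useq c n, useq c (Suc n), - useq c (Suc n), useq c (Suc (Suc n)))"
  by (induction n) (auto simp: algebra_simps)

lemma useq_grow: "\<bar>c\<bar> \<ge> 2 \<Longrightarrow> \<bar>useq c (Suc n)\<bar> > \<bar>useq c n\<bar>"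
proof (induction n)
  case 0 then show ?case by simp
next
  case (Suc n)
  have "\<bar>c * useq c (Suc n)\<bar> \<ge> 2 * \<bar>useq c (Suc n)\<bar>"
    using Suc.prems by (simp add: abs_mult mult_right_mono)
  then show ?case using Suc by (simp add: abs_diff_le_iff)
qed

theorem lemma2p5:
  fixes r :: nat and e :: "nat \<Rightarrow> int"
  assumes "r \<ge> 1"
    and "\<forall>s. s permutes {1..r} \<longrightarrow>
           Phi (\<lambda>i. of_int (e (s i))) r = ratfun_X"
  shows "(\<forall>i\<in>{1..r}. e i = e 1) \<and> e 1 \<in> {-1, 0, 1}"
proof -
  have eq: "e i = e j" if ij: "i \<in> {1..r}" "j \<in> {1..r}" "i \<noteq> j" for i j
  proof -
    define k where "k = transpose 1 i j"
    have k1: "k \<noteq> 1" using ij by (auto simp: k_def transpose_def)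
    have kr: "k \<in> {1..r}" using ij by (auto simp: k_def transpose_def)
    have r2: "r \<ge> 2" using ij by auto
    define s1 where "s1 = transpose 1 i \<circ> transpose 2 k"
    define s2 where "s2 = s1 \<circ> transpose 1 2"
    have p1: "s1 permutes {1..r}" unfolding s1_def
      using ij kr r2 by (intro permutes_compose permutes_swap_id) auto
    have p2: "s2 permutes {1..r}" unfolding s2_def
      using p1 r2 by (intro permutes_compose permutes_swap_id) auto
    have s11: "s1 1 = i" using k1 by (simp add: s1_def transpose_def)
    have s12: "s1 2 = j" by (auto simp: s1_def k_def transpose_def)
    have s21: "s2 1 = j" using s12 by (simp add: s2_def transpose_def)
    have s22: "s2 2 = i" using s11 by (simp add: s2_def transpose_def)
    obtain m where rm: "r = 2 + m" using r2 by (metis le_add_diff_inverse)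
    define R where "R = prodM (\<lambda>n. e (s1 (n + 2))) m"
    have s3: "prodM (\<lambda>n. e (s2 (n + 2))) m = R"
      unfolding R_def by (rule prodM_cong) (auto simp: s2_def transpose_def)
    have A0: "prodM (\<lambda>n. e (s1 n)) r = mm R (prodM (\<lambda>n. e (s1 n)) 2)"
      unfolding rm R_def by (rule prodM_split)
    have A2: "prodM (\<lambda>n. e (s1 n)) 2 = mm (Mt (e j)) (Mt (e i))"
      by (simp only: prodM_2 s11 s12)
    have B0: "prodM (\<lambda>n. e (s2 n)) r = mm R (prodM (\<lambda>n. e (s2 n)) 2)"
      unfolding rm s3[symmetric] by (rule prodM_split)
    have B2: "prodM (\<lambda>n. e (s2 n)) 2 = mm (Mt (e i)) (Mt (e j))"
      by (simp only: prodM_2 s21 s22)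
    have A: "prodM (\<lambda>n. e (s1 n)) r = mm R (mm (Mt (e j)) (Mt (e i)))" using A0 A2 by simp
    have B: "prodM (\<lambda>n. e (s2 n)) r = mm R (mm (Mt (e i)) (Mt (e j)))" using B0 B2 by simp
    have X1: "Phi (\<lambda>n. of_int (e (s1 n))) r = ratfun_X" using assms(2) p1 by blast
    have X2: "Phi (\<lambda>n. of_int (e (s2 n))) r = ratfun_X" using assms(2) p2 by blast
    obtain x1 x2 x3 x4 where hx: "prodM (\<lambda>n. e (s1 n)) r = (x1,x2,x3,x4)"
      by (cases "prodM (\<lambda>n. e (s1 n)) r") auto
    obtain y1 y2 y3 y4 where hy: "prodM (\<lambda>n. e (s2 n)) r = (y1,y2,y3,y4)"
      by (cases "prodM (\<lambda>n. e (s2 n)) r") auto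
    from X_cond[of "\<lambda>n. e (s1 n)" r] X1 hx have "x2 = 0" "x3 = 0" "x4 \<noteq> 0" by auto
    moreover from X_cond[of "\<lambda>n. e (s2 n)" r] X2 hy have "y2 = 0" "y3 = 0" by auto
    ultimately have "e j = e i" using swap_eq[of R "e j" "e i" x1 x4 y1 y4] A B hx hy by auto
    then show ?thesis by simp
  qed
  then have all: "\<forall>i\<in>{1..r}. e i = e 1" using assms(1) by force
  have "prodM e r = prodM (\<lambda>_. e 1) r" using prodM_cong[of r e "\<lambda>_. e 1"] all by blast
  moreover have "Phi (\<lambda>i. of_int (e i)) r = ratfun_X"
    using assms(2) permutes_id[of "{1..r}"] by (simp add: id_def)
  ultimately obtain x1 x4 where X: "prodM (\<lambda>_. e 1) r = (x1,0,0,x4)" using X_cond[of e r] by auto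
  obtain n where n: "r = Suc n" using assms(1) by (cases r) auto
  have "useq (e 1) (Suc n) = 0" using X n prodM_const[of "e 1" n] by simp
  moreover have "\<bar>e 1\<bar> \<ge> 2 \<Longrightarrow> useq (e 1) (Suc n) \<noteq> 0"
    using useq_grow[of "e 1" n] by auto
  ultimately have "\<bar>e 1\<bar> < 2" by linarith
  then have "e 1 \<in> {-1, 0, 1}" by auto
  with all show ?thesis by blast
qed

end
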